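(* Let $\mathcal{X}\subset\mathbb{R}$ be compact and let $p$ be a continuous probability density on $\mathcal{X}$. Assume there exists $\delta>0$ with $\inf_{x\in\mathcal{X}}p(x)>\delta$. Then for every $\epsilon>0$ there exist an integer $N\ge1$ and real constants $\mu_i\in\mathbb{R}$, $\sigma_i>0$ ($i=1,\dots,N$) such that, with $$f_N(x)=\frac{1}{N}\sum_{i=1}^N \frac{e^{-\frac{x-\mu_i}{\sigma_i}}}{\sigma_i\left(1+e^{-\frac{x-\mu_i}{\sigma_i}}\right)^2},$$ one has $\mathrm{KL}(p\,\|\,f_N)=\int_{\mathcal{X}}p(x)\log\frac{p(x)}{f_N(x)}\,dx<\epsilon$.
   Context: $\mathrm{KL}(p\|q)=\int p\log(p/q)$ denotes the Kullback–Leibler divergence. $f_N$ is the density on $\mathbb{R}$ of an equally weighted mixture of $N$ logistic distributions with locations $\mu_i$ and scales $\sigma_i$. *)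

theory Defs
  imports "HOL-Analysis.Analysis"
begin

definition logistic_pdf :: "real \<Rightarrow> real \<Rightarrow> real \<Rightarrow> real" where
  "logistic_pdf mu s x = exp (- (x - mu) / s) / (s * (1 + exp (- (x - mu) / s))^2)"

definition logistic_mixture :: "nat \<Rightarrow> (nat \<Rightarrow> real) \<Rightarrow> (nat \<Rightarrow> real) \<Rightarrow> real \<Rightarrow> real" where
  "logistic_mixture N mu s x = (1 / real N) * (\<Sum>i=1..N. logistic_pdf (mu i) (s i) x)"

end

theory Submission
  imports Defs
begin


definition lF :: "real \<Rightarrow> real" where "lF t = 1 / (1 + exp (- t))"
definition lg :: "real \<Rightarrow> real" where "lg t = exp (- t) / (1 + exp (- t))^2"

lemma pdf_lg: "(s::real) > 0 \<Longrightarrow> logistic_pdf mu s x = lg ((x - mu) / s) / s"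
  unfolding logistic_pdf_def lg_def by (simp add: minus_divide_left)

lemma lg_pos: "lg t > 0"
proof -
  have "1 + exp (- t) > 0" using exp_gt_zero[of "-t"] by linarith
  then show ?thesis unfolding lg_def by (intro divide_pos_pos) auto
qed

lemma a1: "(e::real) > 0 \<Longrightarrow> 1/(1 + inverse e) - 1/(1+e) = 1 - 2/(1+e)"
proof -
  assume e: "e > 0"
  have "1/(1+inverse e) = e/(1+e)" using e by (simp add: field_simps)
  moreover have "e/(1+e) - 1/(1+e) = (e-1)/(1+e)" by (simp add: diff_divide_distrib)
  moreover have "(e-1)/(1+e) = 1 - 2/(1+e)" using e by (simp add: field_simps)
  ultimately show ?thesis by simp
qed

lemma a2: "(e::real) > 0 \<Longrightarrow> (e * - 1 * (1 + e)\<^sup>2 - e * (real 2 * ((0 + e * - 1) * (1 + e) ^ (2 - Suc 0)))) / ((1 + e)\<^sup>2 * (1 + e)\<^sup>2) = e * (e - 1) / (1 + e) ^ 3"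
proof -
  assume e: "e > 0"
  have "(1+e)^4 \<noteq> 0" "(1+e)^3 \<noteq> 0" using e by auto
  then show ?thesis by (simp add: divide_eq_eq eq_divide_eq) (simp add: algebra_simps power2_eq_square power3_eq_cube power4_eq_xxxx)
qed

lemma a3: "(e::real) > 0 \<Longrightarrow> (0 * (1 + e) - 1 * (0 + e * - 1)) / ((1 + e) * (1 + e)) = e / (1 + e)\<^sup>2"
  by (simp add: power2_eq_square)

lemma DERIV_lF: "DERIV lF t :> lg t"
proof -
  have p: "1 + exp (- t) \<noteq> 0" using exp_gt_zero[of "-t"] by linarith
  show ?thesis unfolding lF_def lg_def
    apply (rule derivative_eq_intros refl)+
    using p a3[of "exp (-t)"] by simp_all
qed

lemma DERIV_lg: "DERIV lg t :> exp (- t) * (exp (- t) - 1) / (1 + exp (- t))^3"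
proof -
  have p: "1 + exp (- t) \<noteq> 0" using exp_gt_zero[of "-t"] by linarith
  show ?thesis unfolding lg_def
    apply (rule derivative_eq_intros refl)+
    using p a2[of "exp (-t)"] by simp_all
qed

lemma lg_deriv_bound: "\<bar>exp (- (t::real)) * (exp (- t) - 1) / (1 + exp (- t))^3\<bar> \<le> 1"
proof -
  define e where "e = exp (- t)"
  have e: "e > 0" unfolding e_def by (rule exp_gt_zero)
  have "\<bar>e * (e - 1)\<bar> \<le> e * (e + 1)" using e by (simp add: abs_mult abs_le_iff)
  also have "\<dots> \<le> (1 + e)^3" using e by (simp add: power3_eq_cube algebra_simps)
  finally show ?thesis using e unfolding e_def[symmetric]
    by (simp add: abs_div pos_divide_le_eq)
qed

lemma cell_bound:
  assumes h: "h > 0"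
  shows "lF u - lF (u - h) \<le> h * lg u + h^2"
proof -
  obtain z where z: "u - h < z" "z < u" "lF u - lF (u - h) = (u - (u - h)) * lg z"
    using MVT2[of "u - h" u lF lg] h DERIV_lF by auto
  obtain w where w: "z < w" "w < u"
    "lg u - lg z = (u - z) * (exp (- w) * (exp (- w) - 1) / (1 + exp (- w))^3)"
    using MVT2[of z u lg "\<lambda>t. exp (- t) * (exp (- t) - 1) / (1 + exp (- t))^3"] z DERIV_lg by auto
  have "\<bar>lg u - lg z\<bar> \<le> (u - z) * 1"
    unfolding w(3) abs_mult using z lg_deriv_bound[of w]
    by (intro mult_mono) auto
  then have "lg z \<le> lg u + h" using z by auto
  then have "h * lg z \<le> h * (lg u + h)" using h by (simp add: mult_left_mono)
  then show ?thesis using z(3) by (simp add: power2_eq_square algebra_simps)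
qed

lemma lF_mono: "a \<le> b \<Longrightarrow> lF a \<le> lF b"
  unfolding lF_def by (simp add: frac_le add_pos_pos)

lemma lF_diff: "lF L - lF (- L) = 1 - 2 / (1 + exp L)"
  unfolding lF_def using a1[of "exp L"] by (simp add: exp_minus)



lemma window_sum:
  fixes d A L x :: real and m :: nat
  assumes d: "d > 0" and A: "A > 0" and m: "real m \<ge> L * A"
  shows "(\<Sum>j\<le>2*m. d * logistic_pdf (real_of_int (\<lfloor>x/d\<rfloor> - int m + int j) * d) (A*d) x)
          \<ge> 1 - 2/(1+exp L) - real (2*m+1) / A^2"
proof -
  define k0 where "k0 = \<lfloor>x/d\<rfloor>"
  define u where "u j = (x - real_of_int (k0 - int m + int j) * d) / (A*d)" for j :: nat
  define h where "h = 1 / A"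
  have h: "h > 0" using A by (simp add: h_def)
  have k0: "real_of_int k0 * d \<le> x" "x < (real_of_int k0 + 1) * d"
  proof -
    have "real_of_int k0 \<le> x/d" unfolding k0_def by simp
    then show "real_of_int k0 * d \<le> x" using d by (simp add: pos_le_divide_eq)
    have "x/d < real_of_int k0 + 1" unfolding k0_def by linarith
    then show "x < (real_of_int k0 + 1) * d" using d by (simp add: pos_divide_less_eq)
  qed
  have uS: "u (Suc j) = u j - h" for j
    unfolding u_def h_def using d A by (simp add: field_simps)
  have trm: "d * logistic_pdf (real_of_int (k0 - int m + int j) * d) (A*d) x = h * lg (u j)" for j
    using d A by (simp add: pdf_lg u_def h_def field_simps)
  have cb: "h * lg (u j) \<ge> lF (u j) - lF (u (Suc j)) - h^2" for j
    using cell_bound[OF h, of "u j"] uS by simp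
  have "(\<Sum>j\<le>2*m. d * logistic_pdf (real_of_int (k0 - int m + int j) * d) (A*d) x)
      = (\<Sum>j<2*m+1. h * lg (u j))"
    using trm by (simp add: lessThan_Suc_atMost)
  also have "\<dots> \<ge> (\<Sum>j<2*m+1. lF (u j) - lF (u (Suc j)) - h^2)"
    by (intro sum_mono cb)
  moreover have "(\<Sum>j<2*m+1. lF (u j) - lF (u (Suc j)) - h^2)
      = lF (u 0) - lF (u (2*m+1)) - real (2*m+1) * h^2"
  proof -
    have "(\<Sum>j<2*m+1. lF (u j) - lF (u (Suc j))) = lF (u 0) - lF (u (2*m+1))"
      by (rule sum_lessThan_telescope')
    then show ?thesis by (simp add: sum_subtractf)
  qed
  moreover have "u 0 \<ge> L"
  proof -
    have "u 0 = (x - real_of_int k0 * d) / (A*d) + real m / A"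
      unfolding u_def using d A by (simp add: field_simps)
    moreover have "(x - real_of_int k0 * d) / (A*d) \<ge> 0" using k0 d A by simp
    moreover have "real m / A \<ge> L" using m A by (simp add: pos_le_divide_eq)
    ultimately show ?thesis by linarith
  qed
  moreover have "u (2*m+1) \<le> - L"
  proof -
    have "u (2*m+1) = (x - (real_of_int k0 + 1) * d) / (A*d) - real m / A"
      unfolding u_def using d A by (simp add: field_simps)
    moreover have "(x - (real_of_int k0 + 1) * d) / (A*d) \<le> 0" using k0 d A
      by (intro divide_nonpos_pos) auto
    moreover have "real m / A \<ge> L" using m A by (simp add: pos_le_divide_eq)
    ultimately show ?thesis by linarith
  qed
  ultimately have "(\<Sum>j\<le>2*m. d * logistic_pdf (real_of_int (k0 - int m + int j) * d) (A*d) x)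
      \<ge> lF L - lF (- L) - real (2*m+1) * h^2"
    using lF_mono[of L "u 0"] lF_mono[of "u (2*m+1)" "- L"] by linarith
  then show ?thesis unfolding k0_def lF_diff h_def by (simp add: power_divide)
qed


lemma Ico_int: "(a::real) \<le> b \<Longrightarrow> integral UNIV (indicator {a..<b} :: real \<Rightarrow> real) = b - a"
proof -
  assume "a \<le> b"
  have "{a..<b} \<in> lmeasurable" using bounded_Ico measurable_convex by blast
  then have "measure lebesgue {a..<b} = integral UNIV (indicator {a..<b} :: real \<Rightarrow> real)"
    by (rule lmeasure_integral_UNIV)
  moreover have "measure lebesgue {a..<b} = b - a" using \<open>a \<le> b\<close> by simp
  ultimately show ?thesis by simp
qed

lemma sum_list_concat': "sum_list (concat xss) = sum_list (map sum_list (xss :: real list list))"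
  by (induct xss) auto

lemma mixture_list:
  fixes J :: "int set" and n :: "int \<Rightarrow> nat" and c :: "int \<Rightarrow> real" and G :: "real \<Rightarrow> real"
  assumes "finite J"
  shows "length (concat (map (\<lambda>k. replicate (n k) (c k)) (sorted_list_of_set J))) = (\<Sum>k\<in>J. n k)"
    and "(\<Sum>i=1..length (concat (map (\<lambda>k. replicate (n k) (c k)) (sorted_list_of_set J))).
            G ((concat (map (\<lambda>k. replicate (n k) (c k)) (sorted_list_of_set J))) ! (i-1)))
         = (\<Sum>k\<in>J. real (n k) * G (c k))"
proof -
  define L where "L = concat (map (\<lambda>k. replicate (n k) (c k)) (sorted_list_of_set J))"
  show "length (concat (map (\<lambda>k. replicate (n k) (c k)) (sorted_list_of_set J))) = (\<Sum>k\<in>J. n k)"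
    using assms by (simp add: length_concat sum_list_distinct_conv_sum_set comp_def)
  have "(\<Sum>i=1..length L. G (L ! (i-1))) = (\<Sum>i<length L. G (L ! i))"
    by (metis (mono_tags, lifting) One_nat_def diff_Suc_1' sum.cong sum_bounds_lt_plus1)
  also have "\<dots> = sum_list (map G L)" by (simp add: sum_list_sum_nth atLeast0LessThan)
  also have "\<dots> = (\<Sum>k\<in>J. real (n k) * G (c k))"
    unfolding L_def using assms by (simp add: map_concat sum_list_concat' comp_def sum_list_replicate sum_list_distinct_conv_sum_set)
  finally show "(\<Sum>i=1..length (concat (map (\<lambda>k. replicate (n k) (c k)) (sorted_list_of_set J))).
            G ((concat (map (\<lambda>k. replicate (n k) (c k)) (sorted_list_of_set J))) ! (i-1)))
         = (\<Sum>k\<in>J. real (n k) * G (c k))" unfolding L_def .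
qed


lemma frac_aux: "(Q::real) \<ge> 0 \<Longrightarrow> N > 0 \<Longrightarrow> D > 0 \<Longrightarrow> Q * N \<le> Q * (M * D) \<Longrightarrow> Q / D \<le> M * Q / N"
  by (simp add: mult.left_commute pos_divide_le_eq pos_le_divide_eq)

lemma int_cmul: "f integrable_on S \<Longrightarrow> (\<lambda>x. (c::real) * f x) integrable_on S"
  using integrable_cmul[of f S c] by simp

theorem mainTheorem2:
  fixes X :: "real set" and p :: "real \<Rightarrow> real" and \<delta> :: real
  assumes "compact X"
    and "continuous_on X p"
    and "\<And>x. x \<in> X \<Longrightarrow> p x \<ge> 0"
    and "p integrable_on X"
    and "integral X p = 1"
    and "\<delta> > 0"
    and "(INF x\<in>X. p x) > \<delta>"
  shows "\<forall>\<epsilon>>0. \<exists>N::nat. N \<ge> 1 \<and> (\<exists>mu s :: nat \<Rightarrow> real. (\<forall>i\<in>{1..N}. s i > 0) \<and>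
           (\<lambda>x. p x * ln (p x / logistic_mixture N mu s x)) integrable_on X \<and>
           integral X (\<lambda>x. p x * ln (p x / logistic_mixture N mu s x)) < \<epsilon>)"
proof (intro allI impI)
  fix \<epsilon> :: real assume \<epsilon>: "\<epsilon> > 0"
  have Xne: "X \<noteq> {}" using assms(5) by auto
  have bddb: "bdd_below (p ` X)" by (meson assms(3) bdd_belowI2)
  have pdel: "p x > \<delta>" if "x \<in> X" for x
    using cINF_lower[OF bddb that] assms(7) by linarith
  have ppos: "p x > 0" if "x \<in> X" for x using pdel[OF that] assms(6) by linarith
  obtain K where K: "K > 0" "\<And>x. x \<in> X \<Longrightarrow> p x \<le> K"
  proof -
    have "compact (p ` X)" by (rule compact_continuous_image[OF assms(2) assms(1)])
    then obtain B where "\<forall>y\<in>p ` X. norm y \<le> B" using compact_imp_bounded bounded_iff by metis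
    then show ?thesis by (intro that[of "max B 1"]) auto
  qed
  obtain B where B: "\<And>x. x \<in> X \<Longrightarrow> \<bar>x\<bar> \<le> B"
    using compact_imp_bounded[OF assms(1)] bounded_iff by (metis real_norm_def)
  define \<eta> where "\<eta> = min (1/12) ((1 - exp (-\<epsilon>))/12)"
  have ex1: "exp (-\<epsilon>) < 1" using \<epsilon> by simp
  have \<eta>: "\<eta> > 0" "\<eta> \<le> 1/12" "6*\<eta> < 1 - exp (-\<epsilon>)"
    using ex1 unfolding \<eta>_def by auto
  obtain Ln :: nat where Ln: "real Ln \<ge> 2/\<eta>" "Ln \<ge> 1"
  proof -
    obtain n :: nat where "2/\<eta> \<le> real n" using real_arch_simple by blast
    then show ?thesis by (intro that[of "max n 1"]) auto
  qed
  define L where "L = real Ln"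
  have L1: "2/(1+exp L) \<le> \<eta>"
  proof -
    have "1 + exp L \<ge> 2/\<eta>" using exp_ge_add_one_self[of L] Ln unfolding L_def by linarith
    then have "2 \<le> \<eta> * (1 + exp L)" using \<eta> by (simp add: divide_le_eq mult.commute)
    moreover have "1 + exp L > 0" by (smt (verit) exp_gt_zero)
    ultimately show ?thesis by (simp add: divide_le_eq)
  qed
  obtain An :: nat where An: "real An \<ge> 3*L/\<eta>" "An \<ge> 1"
  proof -
    obtain n :: nat where "3*L/\<eta> \<le> real n" using real_arch_simple by blast
    then show ?thesis by (intro that[of "max n 1"]) auto
  qed
  define A where "A = real An"
  define m where "m = An * Ln"
  have Apos: "A > 0" using An unfolding A_def by simp
  have mLA: "real m \<ge> L * A" unfolding m_def L_def A_def by simp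
  have Am: "real (2*m+1) / A^2 \<le> \<eta>"
  proof -
    have "m \<ge> 1" unfolding m_def using An(2) Ln(2) by (simp add: one_le_mult_iff)
    then have "real (2*m+1) \<le> 3 * real m" by simp
    also have "\<dots> = 3 * A * L" unfolding m_def A_def L_def by simp
    finally have "real (2*m+1) \<le> 3 * A * L" .
    also have "\<dots> \<le> \<eta> * A^2"
    proof -
      have "3*L \<le> \<eta> * A" using An \<eta> unfolding A_def by (simp add: divide_le_eq mult.commute)
      then have "3*L*A \<le> \<eta> * A * A" using Apos by (simp add: mult_right_mono)
      then show ?thesis by (simp add: power2_eq_square algebra_simps)
    qed
    finally show ?thesis using Apos by (simp add: divide_le_eq mult.commute)
  qed
  obtain \<rho>1 where \<rho>1: "\<rho>1 > 0" "\<And>x x'. x \<in> X \<Longrightarrow> x' \<in> X \<Longrightarrow> dist x' x < \<rho>1 \<Longrightarrow> dist (p x') (p x) < \<eta> * \<delta>"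
    using compact_uniformly_continuous[OF assms(2) assms(1)] \<eta>(1) assms(6)
    unfolding uniformly_continuous_on_def by (metis mult_pos_pos)
  have Xleb: "X \<in> sets lebesgue" using lmeasurable_compact[OF assms(1)] by (simp add: fmeasurableD)
  obtain T where T: "open T" "X \<subseteq> T" "(T - X) \<in> lmeasurable" "emeasure lebesgue (T - X) < ennreal (\<eta>/K)"
    using sets_lebesgue_outer_open[OF Xleb, of "\<eta>/K"] \<eta>(1) K(1) by auto
  have mTX: "measure lebesgue (T - X) < \<eta>/K"
    using T(3,4) \<eta>(1) K(1) by (simp add: emeasure_eq_measure2 ennreal_less_iff)
  obtain \<rho>2 where \<rho>2: "\<rho>2 > 0" "(\<Union>x\<in>X. cball x \<rho>2) \<subseteq> T"
    using compact_subset_open_imp_cball_epsilon_subset[OF assms(1) T(1) T(2)] by blast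
  define d where "d = min \<rho>1 \<rho>2 / (4 * (real m + 1))"
  define r where "r = (real m + 1) * d"
  have d: "d > 0" unfolding d_def using \<rho>1 \<rho>2 by simp
  have r2: "2 * r = min \<rho>1 \<rho>2 / 2" unfolding r_def d_def by (simp add: field_simps)
  have r: "2 * r < \<rho>1" "2 * r \<le> \<rho>2" "d \<le> r" "r > 0"
    using r2 \<rho>1 \<rho>2 d unfolding r_def by (auto simp: algebra_simps)
  define s where "s = A * d"
  have s: "s > 0" unfolding s_def using Apos d by simp
  define J where "J = {k::int. \<exists>z\<in>X. \<bar>z - real_of_int k * d\<bar> \<le> r}"
  have finJ: "finite J"
  proof (rule finite_subset)
    show "J \<subseteq> {\<lfloor>-(B+r)/d\<rfloor>..\<lceil>(B+r)/d\<rceil>}"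
    proof
      fix k assume "k \<in> J"
      then obtain z where z: "z \<in> X" "\<bar>z - real_of_int k * d\<bar> \<le> r" unfolding J_def by auto
      have "\<bar>real_of_int k * d\<bar> \<le> B + r" using B[OF z(1)] z(2) by linarith
      then have "- (B + r) \<le> real_of_int k * d" "real_of_int k * d \<le> B + r" by linarith+
      then have "- (B + r) / d \<le> real_of_int k" "real_of_int k \<le> (B + r) / d"
        using d by (simp_all add: pos_divide_le_eq pos_le_divide_eq)
      then show "k \<in> {\<lfloor>-(B+r)/d\<rfloor>..\<lceil>(B+r)/d\<rceil>}"
        by (simp add: floor_le_iff le_ceiling_iff)
    qed
  qed simp
  define zk where "zk k = (SOME z. z \<in> X \<and> \<bar>z - real_of_int k * d\<bar> \<le> r)" for k
  have zk: "zk k \<in> X" "\<bar>zk k - real_of_int k * d\<bar> \<le> r" if "k \<in> J" for k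
  proof -
    have "\<exists>z. z \<in> X \<and> \<bar>z - real_of_int k * d\<bar> \<le> r" using that unfolding J_def by auto
    from someI_ex[OF this] show "zk k \<in> X" "\<bar>zk k - real_of_int k * d\<bar> \<le> r"
      unfolding zk_def by auto
  qed
  have floor_d: "real_of_int \<lfloor>x/d\<rfloor> * d \<le> x" "x < real_of_int \<lfloor>x/d\<rfloor> * d + d" for x
  proof -
    have "real_of_int \<lfloor>x/d\<rfloor> \<le> x/d" by simp
    then show "real_of_int \<lfloor>x/d\<rfloor> * d \<le> x" by (metis d pos_le_divide_eq)
    have "x/d < real_of_int \<lfloor>x/d\<rfloor> + 1" by linarith
    then show "x < real_of_int \<lfloor>x/d\<rfloor> * d + d" using d by (simp add: pos_divide_less_eq algebra_simps)
  qed
  have winJ: "\<lfloor>x/d\<rfloor> - int m + int j \<in> J" "\<bar>x - real_of_int (\<lfloor>x/d\<rfloor> - int m + int j) * d\<bar> \<le> r"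
    if "x \<in> X" "j \<le> 2*m" for x j
  proof -
    have e: "real_of_int (\<lfloor>x/d\<rfloor> - int m + int j) * d = real_of_int \<lfloor>x/d\<rfloor> * d - real m * d + real j * d"
      by (simp add: algebra_simps)
    have j1: "real j * d \<le> 2 * real m * d" using that(2) d by (simp add: mult_right_mono)
    have j0: "real j * d \<ge> 0" using d by simp
    have "(real m + 1) * d = real m * d + d" by (simp add: algebra_simps)
    then show "\<bar>x - real_of_int (\<lfloor>x/d\<rfloor> - int m + int j) * d\<bar> \<le> r"
      unfolding e r_def abs_le_iff using floor_d[of x] j0 j1 by linarith
    then show "\<lfloor>x/d\<rfloor> - int m + int j \<in> J" unfolding J_def using that(1) by auto
  qed
  have Jne: "J \<noteq> {}" using winJ(1)[of _ 0] Xne by blast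
  define W where "W = (\<Sum>k\<in>J. d * p (zk k))"
  have Wle: "W \<le> 1 + 2 * \<eta>"
  proof -
    define cell where "cell k = {real_of_int k * d..<real_of_int k * d + d}" for k
    define \<phi> where "\<phi> y = (\<Sum>k\<in>J. p (zk k) * indicator (cell k) y)" for y
    have cell_lm: "cell k \<in> lmeasurable" for k
      unfolding cell_def using bounded_Ico measurable_convex by blast
    have ind_int: "(indicator (cell k) :: real \<Rightarrow> real) integrable_on UNIV" for k
      using cell_lm[of k] by (simp add: integrable_on_indicator)
    have ind_val: "integral UNIV (indicator (cell k) :: real \<Rightarrow> real) = d" for k
    proof -
      have "measure lebesgue (cell k) = integral UNIV (indicator (cell k) :: real \<Rightarrow> real)"
        by (rule lmeasure_integral_UNIV[OF cell_lm])
      moreover have "measure lebesgue (cell k) = d" unfolding cell_def using d by simp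
      ultimately show ?thesis by simp
    qed
    have phi_int: "\<phi> integrable_on UNIV"
      unfolding \<phi>_def by (intro integrable_sum int_cmul ind_int finJ)
    have phi_val: "integral UNIV \<phi> = W"
      unfolding \<phi>_def W_def
      by (subst integral_sum) (auto simp: finJ ind_int int_cmul ind_val mult.commute)
    define g where "g y = (1 + \<eta>) * (if y \<in> X then p y else 0) + K * indicator (T - X) y" for y
    have pX_int: "(\<lambda>y. if y \<in> X then p y else 0) integrable_on UNIV"
      using assms(4) by (simp add: integrable_restrict_UNIV)
    have TX_int: "(indicator (T - X) :: real \<Rightarrow> real) integrable_on UNIV"
      using T(3) by (simp add: integrable_on_indicator)
    have g_int: "g integrable_on UNIV"
      unfolding g_def by (intro integrable_add int_cmul pX_int TX_int)
    have g_val: "integral UNIV g = (1 + \<eta>) + K * measure lebesgue (T - X)"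
      unfolding g_def
      by (simp add: integral_add int_cmul pX_int TX_int integral_restrict_UNIV
          assms(5) lmeasure_integral_UNIV[OF T(3)])
    have cell_iff: "y \<in> cell k \<longleftrightarrow> k = \<lfloor>y/d\<rfloor>" for y k
    proof -
      have "y \<in> cell k \<longleftrightarrow> real_of_int k \<le> y/d \<and> y/d < real_of_int k + 1"
        unfolding cell_def using d by (simp add: pos_le_divide_eq pos_divide_less_eq algebra_simps)
      also have "\<dots> \<longleftrightarrow> \<lfloor>y/d\<rfloor> = k" by (simp add: floor_eq_iff)
      finally show ?thesis by auto
    qed
    have phi_eq: "\<phi> y = (if \<lfloor>y/d\<rfloor> \<in> J then p (zk \<lfloor>y/d\<rfloor>) else 0)" for y
    proof -
      have "\<phi> y = (\<Sum>k\<in>J. if k = \<lfloor>y/d\<rfloor> then p (zk k) else 0)"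
        unfolding \<phi>_def by (intro sum.cong refl) (simp add: indicator_def cell_iff)
      also have "\<dots> = (if \<lfloor>y/d\<rfloor> \<in> J then p (zk \<lfloor>y/d\<rfloor>) else 0)"
        using finJ by (simp add: sum.delta')
      finally show ?thesis .
    qed
    have phi_le: "\<phi> y \<le> g y" for y
    proof (cases "\<lfloor>y/d\<rfloor> \<in> J")
      case False
      then have "\<phi> y = 0" using phi_eq by simp
      moreover have "g y \<ge> 0" unfolding g_def using assms(3) K(1) \<eta>(1)
        by (auto simp: indicator_def)
      ultimately show ?thesis by simp
    next
      case True
      define k where "k = \<lfloor>y/d\<rfloor>"
      have kJ: "k \<in> J" using True k_def by simp
      have phik: "\<phi> y = p (zk k)" using phi_eq True k_def by simp
      have "\<bar>y - real_of_int k * d\<bar> < d" using floor_d[of y] k_def by auto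
      then have yz: "\<bar>y - zk k\<bar> < 2 * r" using zk(2)[OF kJ] r(3) by linarith
      show ?thesis
      proof (cases "y \<in> X")
        case True
        have "dist (p (zk k)) (p y) < \<eta> * \<delta>"
          using \<rho>1(2)[OF True zk(1)[OF kJ]] yz r(1) by (simp add: dist_real_def)
        then have "p (zk k) \<le> p y + \<eta> * p y"
          using pdel[OF True] \<eta>(1) by (simp add: dist_real_def abs_less_iff)
            (smt (verit) mult_strict_left_mono)
        moreover have "g y \<ge> (1 + \<eta>) * p y" unfolding g_def using True K(1) by (simp add: indicator_def)
        ultimately show ?thesis using phik by (simp add: algebra_simps)
      next
        case False
        have "y \<in> cball (zk k) \<rho>2" using yz r(2) by (simp add: dist_real_def)
        then have "y \<in> T" using \<rho>2(2) zk(1)[OF kJ] by blast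
        then have "g y = K" unfolding g_def using False by simp
        then show ?thesis using phik K(2)[OF zk(1)[OF kJ]] by simp
      qed
    qed
    have "W = integral UNIV \<phi>" using phi_val by simp
    also have "\<dots> \<le> integral UNIV g" by (rule integral_le[OF phi_int g_int]) (simp add: phi_le)
    also have "\<dots> \<le> 1 + 2 * \<eta>"
    proof -
      have "measure lebesgue (T - X) * K < \<eta>" using mTX pos_less_divide_eq[OF K(1)] by blast
      then have "K * measure lebesgue (T - X) \<le> \<eta>" by (simp add: mult.commute)
      then show ?thesis using g_val K(1) by simp
    qed
    finally show ?thesis .
  qed
  define M where "M = real (card J) / \<eta>"
  have Mpos: "M > 0" unfolding M_def using finJ Jne \<eta>(1) by (simp add: card_gt_0_iff)
  define n where "n k = nat \<lceil>M * d * p (zk k)\<rceil>" for k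
  have n_ge: "real (n k) \<ge> M * d * p (zk k)" "n k \<ge> 1" if "k \<in> J" for k
  proof -
    have pos: "M * d * p (zk k) > 0" using Mpos d ppos[OF zk(1)[OF that]] by simp
    then show "real (n k) \<ge> M * d * p (zk k)" unfolding n_def by linarith
    show "n k \<ge> 1" unfolding n_def using pos by linarith
  qed
  have n_le: "real (n k) \<le> M * d * p (zk k) + 1" if "k \<in> J" for k
  proof -
    have pos: "M * d * p (zk k) > 0" using Mpos d ppos[OF zk(1)[OF that]] by simp
    then show ?thesis unfolding n_def by linarith
  qed
  define cs where "cs k = real_of_int k * d" for k
  define Lst where "Lst = concat (map (\<lambda>k. replicate (n k) (cs k)) (sorted_list_of_set J))"
  define N where "N = length Lst"
  have NJ: "N = (\<Sum>k\<in>J. n k)" unfolding N_def Lst_def by (rule mixture_list(1)[OF finJ])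
  have N1: "N \<ge> 1"
  proof -
    obtain k where "k \<in> J" using Jne by blast
    then have "n k \<le> N" unfolding NJ using finJ by (intro member_le_sum) auto
    with n_ge(2)[OF \<open>k \<in> J\<close>] show ?thesis by simp
  qed
  have Nle: "real N \<le> M * (1 + 3 * \<eta>)"
  proof -
    have "real N = (\<Sum>k\<in>J. real (n k))" unfolding NJ by simp
    also have "\<dots> \<le> (\<Sum>k\<in>J. M * d * p (zk k) + 1)" by (intro sum_mono n_le)
    also have "\<dots> = M * W + real (card J)" unfolding W_def by (simp add: sum.distrib sum_distrib_left algebra_simps)
    also have "real (card J) = M * \<eta>" unfolding M_def using \<eta>(1) by simp
    finally have "real N \<le> M * (W + \<eta>)" by (simp add: algebra_simps)
    also have "\<dots> \<le> M * (1 + 3 * \<eta>)" using Wle Mpos by (intro mult_left_mono) auto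
    finally show ?thesis .
  qed
  define mu where "mu i = Lst ! (i - 1)" for i
  define sv where "sv = (\<lambda>i::nat. s)"
  have mix: "logistic_mixture N mu sv x = (1 / real N) * (\<Sum>k\<in>J. real (n k) * logistic_pdf (cs k) s x)" for x
    unfolding logistic_mixture_def mu_def sv_def N_def Lst_def
    using mixture_list(2)[OF finJ, where n=n and c=cs and G="\<lambda>c. logistic_pdf c s x"] by simp
  define c where "c = (1 - \<eta>) * (1 - 2 * \<eta>) / (1 + 3 * \<eta>)"
  have cpos: "c > 0" unfolding c_def using \<eta> by simp
  have cge: "c \<ge> 1 - 6 * \<eta>"
  proof -
    have "(1 - 6 * \<eta>) * (1 + 3 * \<eta>) \<le> (1 - \<eta>) * (1 - 2 * \<eta>)"
      using \<eta>(1) by (simp add: algebra_simps power2_eq_square)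
    then show ?thesis unfolding c_def using \<eta>(1) by (simp add: le_divide_eq)
  qed
  have cex: "c > exp (- \<epsilon>)" using cge \<eta>(3) by linarith
  have pdf_nn: "logistic_pdf y s x \<ge> 0" for y x using pdf_lg[OF s] lg_pos[of "(x - y)/s"] s by simp
  have lower: "logistic_mixture N mu sv x \<ge> c * p x" if xX: "x \<in> X" for x
  proof -
    define kj where "kj j = \<lfloor>x/d\<rfloor> - int m + int j" for j
    have inj: "inj_on kj {..2*m}" unfolding kj_def inj_on_def by auto
    have sub: "kj ` {..2*m} \<subseteq> J" using winJ(1)[OF xX] unfolding kj_def by auto
    have close: "real (n (kj j)) \<ge> M * d * (1 - \<eta>) * p x" if j: "j \<le> 2*m" for j
    proof -
      have kJ: "kj j \<in> J" using sub j by auto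
      have "\<bar>zk (kj j) - x\<bar> \<le> 2 * r" using zk(2)[OF kJ] winJ(2)[OF xX j] unfolding kj_def by linarith
      then have "dist (p (zk (kj j))) (p x) < \<eta> * \<delta>"
        using \<rho>1(2)[OF xX zk(1)[OF kJ]] r(1) by (simp add: dist_real_def)
      then have "p (zk (kj j)) \<ge> p x - \<eta> * p x"
        using pdel[OF xX] \<eta>(1) by (simp add: dist_real_def abs_less_iff)
          (smt (verit) mult_strict_left_mono)
      then have "M * d * p (zk (kj j)) \<ge> M * d * ((1 - \<eta>) * p x)" using Mpos d
        by (intro mult_left_mono) (auto simp: algebra_simps)
      then show ?thesis using n_ge(1)[OF kJ] by (simp add: algebra_simps)
    qed
    have ws: "(\<Sum>j\<le>2*m. d * logistic_pdf (cs (kj j)) s x) \<ge> 1 - 2 * \<eta>"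
      using window_sum[OF d Apos mLA, of x] L1 Am unfolding cs_def kj_def s_def by linarith
    have "(\<Sum>k\<in>J. real (n k) * logistic_pdf (cs k) s x)
        \<ge> (\<Sum>k\<in>kj ` {..2*m}. real (n k) * logistic_pdf (cs k) s x)"
      using sub finJ pdf_nn by (intro sum_mono2) auto
    moreover have "(\<Sum>k\<in>kj ` {..2*m}. real (n k) * logistic_pdf (cs k) s x)
        = (\<Sum>j\<le>2*m. real (n (kj j)) * logistic_pdf (cs (kj j)) s x)"
      by (simp add: sum.reindex[OF inj])
    moreover have "(\<Sum>j\<le>2*m. real (n (kj j)) * logistic_pdf (cs (kj j)) s x)
        \<ge> (\<Sum>j\<le>2*m. M * (1 - \<eta>) * p x * (d * logistic_pdf (cs (kj j)) s x))"
    proof (intro sum_mono)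
      fix j assume "j \<in> {..2*m}"
      then have "real (n (kj j)) \<ge> M * d * (1 - \<eta>) * p x" using close by auto
      then have "real (n (kj j)) * logistic_pdf (cs (kj j)) s x \<ge> M * d * (1 - \<eta>) * p x * logistic_pdf (cs (kj j)) s x"
        using pdf_nn by (intro mult_right_mono) auto
      then show "M * (1 - \<eta>) * p x * (d * logistic_pdf (cs (kj j)) s x) \<le> real (n (kj j)) * logistic_pdf (cs (kj j)) s x"
        by (simp add: algebra_simps)
    qed
    moreover have "(\<Sum>j\<le>2*m. M * (1 - \<eta>) * p x * (d * logistic_pdf (cs (kj j)) s x))
        = M * (1 - \<eta>) * p x * (\<Sum>j\<le>2*m. d * logistic_pdf (cs (kj j)) s x)"
      by (simp add: sum_distrib_left)
    moreover have "M * (1 - \<eta>) * p x * (\<Sum>j\<le>2*m. d * logistic_pdf (cs (kj j)) s x)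
        \<ge> M * (1 - \<eta>) * p x * (1 - 2 * \<eta>)"
      using ws Mpos \<eta> ppos[OF xX] by (intro mult_left_mono) auto
    ultimately have S: "(\<Sum>k\<in>J. real (n k) * logistic_pdf (cs k) s x) \<ge> M * ((1 - \<eta>) * (1 - 2 * \<eta>) * p x)"
      by (simp add: algebra_simps)
    have Npos: "real N > 0" using N1 by simp
    have Q: "(1 - \<eta>) * (1 - 2 * \<eta>) * p x \<ge> 0" using \<eta> ppos[OF xX] by simp
    have "c * p x = (1 - \<eta>) * (1 - 2 * \<eta>) * p x / (1 + 3 * \<eta>)" unfolding c_def by simp
    also have "\<dots> \<le> M * ((1 - \<eta>) * (1 - 2 * \<eta>) * p x) / real N"
    proof -
      have "M * (1 + 3 * \<eta>) > 0" using Mpos \<eta> by simp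
      then have "(1 - \<eta>) * (1 - 2 * \<eta>) * p x * real N \<le> (1 - \<eta>) * (1 - 2 * \<eta>) * p x * (M * (1 + 3 * \<eta>))"
        using Nle Q by (intro mult_left_mono) auto
      then show ?thesis using Npos \<eta>(1) Q by (intro frac_aux) auto
    qed
    also have "\<dots> \<le> (\<Sum>k\<in>J. real (n k) * logistic_pdf (cs k) s x) / real N"
      using S Npos by (simp add: divide_right_mono)
    also have "\<dots> = logistic_mixture N mu sv x" unfolding mix by simp
    finally show ?thesis .
  qed
  show "\<exists>N::nat. N \<ge> 1 \<and> (\<exists>mu s :: nat \<Rightarrow> real. (\<forall>i\<in>{1..N}. s i > 0) \<and>
           (\<lambda>x. p x * ln (p x / logistic_mixture N mu s x)) integrable_on X \<and>
           integral X (\<lambda>x. p x * ln (p x / logistic_mixture N mu s x)) < \<epsilon>)"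
  proof (intro exI conjI)
    define f where "f = logistic_mixture N mu sv"
    have fpos: "f x > 0" if "x \<in> X" for x
      using lower[OF that] cpos ppos[OF that] unfolding f_def by (smt (verit) mult_pos_pos)
    have fcont: "continuous_on X f"
    proof -
      have "continuous_on X (\<lambda>x. logistic_pdf (mu i) (sv i) x)" for i
      proof -
        have "continuous_on X (\<lambda>x. lg ((x - mu i) / s) / s)"
        proof -
          have nz: "(1 + exp (t::real))^2 \<noteq> 0" for t
          proof -
            have "1 + exp t > 0" by (smt (verit) exp_gt_zero)
            then show ?thesis by simp
          qed
          show ?thesis unfolding lg_def by (intro continuous_intros) (use nz s in auto)
        qed
        then show ?thesis unfolding sv_def using pdf_lg[OF s] by simp
      qed
      then show ?thesis unfolding f_def logistic_mixture_def by (intro continuous_intros) auto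
    qed
    have icont: "continuous_on X (\<lambda>x. p x * ln (p x / f x))"
      using fpos ppos by (intro continuous_intros assms(2) fcont) (auto, fastforce+)
    show int1: "(\<lambda>x. p x * ln (p x / logistic_mixture N mu sv x)) integrable_on X"
      unfolding f_def[symmetric]
      by (rule set_borel_integral_eq_integral(1))
        (use borel_integrable_compact[OF assms(1) icont] in \<open>simp add: set_integrable_def\<close>)
    have pt: "p x * ln (p x / f x) \<le> (- ln c) * p x" if xX: "x \<in> X" for x
    proof -
      have "p x / f x \<le> 1 / c"
        using lower[OF xX] cpos fpos[OF xX] ppos[OF xX] unfolding f_def
        by (simp add: divide_le_eq field_simps)
      then have "ln (p x / f x) \<le> ln (1 / c)"
        using ppos[OF xX] fpos[OF xX] cpos by (intro ln_mono) auto
      then have "ln (p x / f x) \<le> - ln c" using cpos by (simp add: ln_div)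
      then have "p x * ln (p x / f x) \<le> p x * (- ln c)" using ppos[OF xX] by (intro mult_left_mono) auto
      then show ?thesis by (simp add: mult.commute)
    qed
    have "integral X (\<lambda>x. p x * ln (p x / f x)) \<le> integral X (\<lambda>x. (- ln c) * p x)"
    proof (rule integral_le)
      show "(\<lambda>x. p x * ln (p x / f x)) integrable_on X" using int1 unfolding f_def .
      show "(\<lambda>x. (- ln c) * p x) integrable_on X" by (rule int_cmul[OF assms(4)])
    qed (rule pt)
    also have "\<dots> = - ln c" using assms(5) by simp
    also have "\<dots> < \<epsilon>"
    proof -
      have "ln (exp (- \<epsilon>)) < ln c" using cex cpos by (intro ln_less_cancel_iff[THEN iffD2]) auto
      then show ?thesis by simp
    qed
    finally show "integral X (\<lambda>x. p x * ln (p x / logistic_mixture N mu sv x)) < \<epsilon>"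
      unfolding f_def .
    show "1 \<le> N" using N1 .
    show "\<forall>i\<in>{1..N}. sv i > 0" unfolding sv_def using s by simp
  qed
qed

end
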